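(* Suppose Assumptions 1, 2 and 4 hold, and let $\mathcal{B}=\mathcal{B}_\beta\times\mathcal{B}_\gamma\subseteq\Theta$ with $\mathcal{B}_\beta\subset\mathbb{R}^k$ and $\mathcal{B}_\gamma\subset\Theta_\gamma$ compact. Then for every $\theta\in\mathcal{B}$ the matrix $$\Psi(\theta)=E\begin{pmatrix}\frac{XX'}{s(X'\gamma)} & \frac{XX'}{s(X'\gamma)}s_1(X'\gamma)e(Y,X,\theta)\\ \frac{XX'}{s(X'\gamma)}s_1(X'\gamma)e(Y,X,\theta) & \frac{XX'}{s(X'\gamma)}\{s_1(X'\gamma)e(Y,X,\theta)\}^2\end{pmatrix}$$ is positive definite.
   Context: Let $Y$ be a scalar random variable and $X$ a random $k\times1$ vector whose first component equals $1$; let $\mathcal{X}$ denote the support of $X$. Write $\mu(X)=E[Y\mid X]$ and $\sigma(X)^2=E[(Y-\mu(X))^2\mid X]$. Let $s$ be a positive scale function, write $s_j(t)=\partial^j s(t)/\partial t^j$ for $j=1,2,3$, and set $\Theta_\gamma=\{\gamma\in\mathbb{R}^k:\Pr[s(X'\gamma)>0]=1\}$ and $\Theta=\mathbb{R}^k\times\Theta_\gamma$. For $\theta=(\beta,\gamma)\in\Theta$ put $e(Y,X,\theta)=(Y-X'\beta)/s(X'\gamma)$. Assumption 1: for $a=0$ or $a=-\infty$, $s:(a,\infty)\to(0,\infty)$ is three times differentiable, strictly increasing and convex, with $\lim_{t\to a}s(t)=0$ and $\lim_{t\to\infty}s(t)=\infty$. Assumption 2: $x\mapsto\sigma(x)^2$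 is bounded away from $0$ uniformly on $\mathcal{X}$. Assumption 4: for all $\gamma\in\Theta_\gamma$, $E[XX'/s(X'\gamma)]$ is nonsingular. *)

theory Defs
  imports "HOL-Probability.Probability"
begin

definition scale_assm ::
  "real set \<Rightarrow> (real \<Rightarrow> real) \<Rightarrow> (real \<Rightarrow> real) \<Rightarrow> (real \<Rightarrow> real) \<Rightarrow> (real \<Rightarrow> real) \<Rightarrow> bool" where
  "scale_assm D s s1 s2 s3 \<longleftrightarrow>
     (D = {0<..} \<or> D = UNIV) \<and>
     (\<forall>t\<in>D. s t > 0) \<and>
     (\<forall>t\<in>D. (s has_real_derivative s1 t) (at t)) \<and>
     (\<forall>t\<in>D. (s1 has_real_derivative s2 t) (at t)) \<and>
     (\<forall>t\<in>D. (s2 has_real_derivative s3 t) (at t)) \<and>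
     strict_mono_on D s \<and>
     convex_on D s \<and>
     (D = {0<..} \<longrightarrow> (s \<longlongrightarrow> 0) (at_right 0)) \<and>
     (D = UNIV \<longrightarrow> (s \<longlongrightarrow> 0) at_bot) \<and>
     filterlim s at_top at_top"

text \<open>\<Theta>_\<gamma> = {\<gamma>. Pr[s(X'\<gamma>) > 0] = 1}, i.e. X'\<gamma> lies a.s. in the domain D of s
  (where s is positive).\<close>
definition Theta_gamma ::
  "'a measure \<Rightarrow> ('a \<Rightarrow> real^'k) \<Rightarrow> real set \<Rightarrow> (real \<Rightarrow> real) \<Rightarrow> (real^'k) set" where
  "Theta_gamma M X D s = {\<gamma>. prob_space.prob M {\<omega>\<in>space M. X \<omega> \<bullet> \<gamma> \<in> D \<and> s (X \<omega> \<bullet> \<gamma>) > 0} = 1}"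

definition resid :: "(real \<Rightarrow> real) \<Rightarrow> real \<Rightarrow> real^'k \<Rightarrow> real^'k \<Rightarrow> real^'k \<Rightarrow> real" where
  "resid s y x \<beta> \<gamma> = (y - x \<bullet> \<beta>) / s (x \<bullet> \<gamma>)"

text \<open>The integrand of \<Psi>(\<theta>), a 2k x 2k matrix indexed by 'k + 'k (Inl = first block,
  Inr = second block).\<close>
definition Psi_integrand ::
  "(real \<Rightarrow> real) \<Rightarrow> (real \<Rightarrow> real) \<Rightarrow> real \<Rightarrow> real^'k \<Rightarrow> real^'k \<Rightarrow> real^'k \<Rightarrow> 'k + 'k \<Rightarrow> 'k + 'k \<Rightarrow> real" where
  "Psi_integrand s s1 y x \<beta> \<gamma> i j =
     (case (i, j) of
        (Inl a, Inl b) \<Rightarrow> x $ a * x $ b / s (x \<bullet> \<gamma>)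
      | (Inl a, Inr b) \<Rightarrow> x $ a * x $ b / s (x \<bullet> \<gamma>) * s1 (x \<bullet> \<gamma>) * resid s y x \<beta> \<gamma>
      | (Inr a, Inl b) \<Rightarrow> x $ a * x $ b / s (x \<bullet> \<gamma>) * s1 (x \<bullet> \<gamma>) * resid s y x \<beta> \<gamma>
      | (Inr a, Inr b) \<Rightarrow> x $ a * x $ b / s (x \<bullet> \<gamma>) * (s1 (x \<bullet> \<gamma>) * resid s y x \<beta> \<gamma>)\<^sup>2)"

definition Psi ::
  "'a measure \<Rightarrow> ('a \<Rightarrow> real) \<Rightarrow> ('a \<Rightarrow> real^'k) \<Rightarrow> (real \<Rightarrow> real) \<Rightarrow> (real \<Rightarrow> real)
    \<Rightarrow> real^'k \<Rightarrow> real^'k \<Rightarrow> real^('k + 'k)^('k + 'k)" where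
  "Psi M Y X s s1 \<beta> \<gamma> = (\<chi> i j. integral\<^sup>L M (\<lambda>\<omega>. Psi_integrand s s1 (Y \<omega>) (X \<omega>) \<beta> \<gamma> i j))"

definition pos_def_matrix :: "real^'n^'n \<Rightarrow> bool" where
  "pos_def_matrix A \<longleftrightarrow> transpose A = A \<and> (\<forall>v. v \<noteq> 0 \<longrightarrow> v \<bullet> (A *v v) > 0)"

end

theory Submission
  imports Defs
begin

lemma s1_pos:
  assumes A1: "scale_assm D s s1 s2 s3" and t: "t \<in> D"
  shows "s1 t > 0"
proof (rule ccontr)
  assume "\<not> s1 t > 0"
  hence le: "s1 t \<le> 0" by simp
  have D: "D = {0<..} \<or> D = UNIV" and cv: "convex_on D s" and sm: "strict_mono_on D s"
    and der: "(s has_real_derivative s1 t) (at t)"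
    using A1 t unfolding scale_assm_def by auto
  define u where "u = (if D = UNIV then t - 1 else t / 2)"
  have u: "u \<in> D" "u < t" using D t unfolding u_def by auto
  have oD: "open D" using D by auto
  have "connected D" using D by (auto intro: convex_connected)
  hence "s u - s t \<ge> s1 t * (u - t)"
    using convex_on_imp_above_tangent[OF cv _ _ u(1), of t "s1 t"] oD t der
    by (simp add: interior_open has_field_derivative_at_within)
  moreover have "s1 t * (u - t) \<ge> 0" using le u by (simp add: mult_nonpos_nonpos)
  moreover have "s u < s t" using sm u t by (simp add: strict_mono_on_def)
  ultimately show False by linarith
qed

lemma dsum_prod: "(\<Sum>i\<in>A. \<Sum>j\<in>B. f i * g j * c) = sum f A * sum g B * (c::real)"
proof -
  have "sum f A * sum g B * c = (\<Sum>i\<in>A. \<Sum>j\<in>B. f i * g j) * c" by (simp add: sum_product)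
  then show ?thesis by (simp add: sum_distrib_right)
qed

lemma sum_Plus_UNIV: "(\<Sum>i\<in>(UNIV::('a::finite + 'b::finite) set). g i) = (\<Sum>i\<in>UNIV. g (Inl i)) + (\<Sum>i\<in>UNIV. g (Inr i))"
  using sum.Plus[of "UNIV::'a set" "UNIV::'b set" g] by (simp add: comp_def)

lemma quad_form:
  fixes v :: "real^('k::finite+'k)" and x \<beta> \<gamma> :: "real^'k"
  shows "(\<Sum>i\<in>UNIV. \<Sum>j\<in>UNIV. v$i * v$j * Psi_integrand s s1 y x \<beta> \<gamma> i j)
    = (x \<bullet> (\<chi> i. v$Inl i) + (x \<bullet> (\<chi> i. v$Inr i)) * (s1 (x\<bullet>\<gamma>) * resid s y x \<beta> \<gamma>))\<^sup>2 / s (x\<bullet>\<gamma>)"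
proof -
  define a where "a = (\<chi> i. v$Inl i)"
  define b where "b = (\<chi> i. v$Inr i)"
  define S where "S = s (x\<bullet>\<gamma>)"
  define T where "T = s1 (x\<bullet>\<gamma>) * resid s y x \<beta> \<gamma>"
  let ?P = "Psi_integrand s s1 y x \<beta> \<gamma>"
  have b1: "(\<Sum>i\<in>UNIV. \<Sum>j\<in>UNIV. v$Inl i * v$Inl j * ?P (Inl i) (Inl j)) = (\<Sum>i\<in>UNIV. \<Sum>j\<in>UNIV. (x$i*a$i) * (x$j*a$j) * (1/S))"
    by (rule sum.cong[OF refl])+ (simp add: Psi_integrand_def a_def b_def T_def S_def)
  have b2: "(\<Sum>i\<in>UNIV. \<Sum>j\<in>UNIV. v$Inl i * v$Inr j * ?P (Inl i) (Inr j)) = (\<Sum>i\<in>UNIV. \<Sum>j\<in>UNIV. (x$i*a$i) * (x$j*b$j) * (T/S))"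
    by (rule sum.cong[OF refl])+ (simp add: Psi_integrand_def a_def b_def T_def S_def)
  have b3: "(\<Sum>i\<in>UNIV. \<Sum>j\<in>UNIV. v$Inr i * v$Inl j * ?P (Inr i) (Inl j)) = (\<Sum>i\<in>UNIV. \<Sum>j\<in>UNIV. (x$i*b$i) * (x$j*a$j) * (T/S))"
    by (rule sum.cong[OF refl])+ (simp add: Psi_integrand_def a_def b_def T_def S_def)
  have b4: "(\<Sum>i\<in>UNIV. \<Sum>j\<in>UNIV. v$Inr i * v$Inr j * ?P (Inr i) (Inr j)) = (\<Sum>i\<in>UNIV. \<Sum>j\<in>UNIV. (x$i*b$i) * (x$j*b$j) * (T\<^sup>2/S))"
    by (rule sum.cong[OF refl])+ (simp add: Psi_integrand_def a_def b_def T_def S_def)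
  have "(\<Sum>i\<in>UNIV. \<Sum>j\<in>UNIV. v$i * v$j * ?P i j)
     = (\<Sum>i\<in>UNIV. \<Sum>j\<in>UNIV. v$Inl i * v$Inl j * ?P (Inl i) (Inl j)) + (\<Sum>i\<in>UNIV. \<Sum>j\<in>UNIV. v$Inl i * v$Inr j * ?P (Inl i) (Inr j))
       + ((\<Sum>i\<in>UNIV. \<Sum>j\<in>UNIV. v$Inr i * v$Inl j * ?P (Inr i) (Inl j)) + (\<Sum>i\<in>UNIV. \<Sum>j\<in>UNIV. v$Inr i * v$Inr j * ?P (Inr i) (Inr j)))"
    by (simp only: sum_Plus_UNIV sum.distrib)
  also have "\<dots> = (x\<bullet>a + (x\<bullet>b) * T)\<^sup>2 / S"
    unfolding b1 b2 b3 b4 dsum_prod inner_vec_def by (simp add: power2_eq_square algebra_simps add_divide_distrib)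
  finally show ?thesis by (simp add: a_def b_def S_def T_def)
qed

lemma (in sigma_finite_subalgebra) condvar_null:
  fixes Y g :: "'a \<Rightarrow> real"
  assumes Yint: "integrable M Y" and Ymeas: "Y \<in> borel_measurable M"
    and AF: "A \<in> sets F" and gF: "g \<in> borel_measurable F"
    and YA: "AE \<omega> in M. \<omega> \<in> A \<longrightarrow> Y \<omega> = g \<omega>"
    and c: "c > 0" "AE \<omega> in M. nn_cond_exp M F (\<lambda>\<omega>'. ennreal ((Y \<omega>' - real_cond_exp M F Y \<omega>')\<^sup>2)) \<omega> \<ge> ennreal c"
  shows "AE \<omega> in M. \<omega> \<notin> A"
proof -
  have AM: "A \<in> sets M" using AF subalg unfolding subalgebra_def by auto
  define I where "I = (indicator A :: 'a \<Rightarrow> real)"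
  have IF: "I \<in> borel_measurable F" unfolding I_def by (rule borel_measurable_indicator[OF AF])
  have IM: "I \<in> borel_measurable M" unfolding I_def by (rule borel_measurable_indicator[OF AM])
  have gM: "g \<in> borel_measurable M" using gF by (rule measurable_from_subalg[OF subalg])
  have IhF: "(\<lambda>\<omega>. I \<omega> * g \<omega>) \<in> borel_measurable F" by (rule borel_measurable_times[OF IF gF])
  have IhM: "(\<lambda>\<omega>. I \<omega> * g \<omega>) \<in> borel_measurable M" by (rule borel_measurable_times[OF IM gM])
  have IYM: "(\<lambda>\<omega>. I \<omega> * Y \<omega>) \<in> borel_measurable M" by (rule borel_measurable_times[OF IM Ymeas])
  have IY: "AE \<omega> in M. I \<omega> * Y \<omega> = I \<omega> * g \<omega>"
    using YA by eventually_elim (simp add: I_def indicator_def)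
  have int1: "integrable M (\<lambda>\<omega>. I \<omega> * Y \<omega>)"
    unfolding I_def using integrable_mult_indicator[OF AM Yint] by simp
  have int2: "integrable M (\<lambda>\<omega>. I \<omega> * g \<omega>)"
    using int1 integrable_cong_AE[OF IYM IhM IY] by simp
  define Yc where "Yc = real_cond_exp M F Y"
  have ce: "AE \<omega> in M. Yc \<omega> * I \<omega> = I \<omega> * Y \<omega>"
  proof -
    have 1: "AE \<omega> in M. real_cond_exp M F (\<lambda>\<omega>. I \<omega> * Y \<omega>) \<omega> = I \<omega> * Yc \<omega>"
      unfolding Yc_def by (rule real_cond_exp_mult[OF IF Ymeas int1])
    have 2: "AE \<omega> in M. real_cond_exp M F (\<lambda>\<omega>. I \<omega> * Y \<omega>) \<omega> = real_cond_exp M F (\<lambda>\<omega>. I \<omega> * g \<omega>) \<omega>"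
      by (rule real_cond_exp_cong[OF IY IYM IhM])
    have 3: "AE \<omega> in M. real_cond_exp M F (\<lambda>\<omega>. I \<omega> * g \<omega>) \<omega> = I \<omega> * g \<omega>"
      by (rule real_cond_exp_F_meas[OF int2 IhF])
    from 1 2 3 IY show ?thesis by eventually_elim (auto simp: mult.commute)
  qed
  have YcM: "Yc \<in> borel_measurable M" unfolding Yc_def by (rule borel_measurable_cond_exp2)
  define Z where "Z = (\<lambda>\<omega>. ennreal ((Y \<omega> - Yc \<omega>)\<^sup>2))"
  have ZM: "Z \<in> borel_measurable M" unfolding Z_def by (rule measurable_compose[OF borel_measurable_power[OF borel_measurable_diff[OF Ymeas YcM]] measurable_ennreal])
  have IeF: "(\<lambda>\<omega>. ennreal (I \<omega>)) \<in> borel_measurable F" by (rule measurable_compose[OF IF measurable_ennreal])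
  have IeM: "(\<lambda>\<omega>. ennreal (I \<omega>)) \<in> borel_measurable M" by (rule measurable_compose[OF IM measurable_ennreal])
  have IZ: "AE \<omega> in M. ennreal (I \<omega>) * Z \<omega> = 0"
    using ce
  proof eventually_elim
    case (elim \<omega>)
    show ?case
    proof (cases "\<omega> \<in> A")
      case False
      hence "I \<omega> = 0" unfolding I_def by (rule indicator_simps)
      thus ?thesis by simp
    next
      case True
      hence I1: "I \<omega> = 1" unfolding I_def by (rule indicator_simps)
      have "Yc \<omega> = Y \<omega>" using elim unfolding I1 by simp
      hence "Z \<omega> = 0" unfolding Z_def by simp
      thus ?thesis by simp
    qed
  qed
  have "(\<integral>\<^sup>+ \<omega>. ennreal (I \<omega>) * nn_cond_exp M F Z \<omega> \<partial>M) = (\<integral>\<^sup>+ \<omega>. ennreal (I \<omega>) * Z \<omega> \<partial>M)"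
    by (rule nn_cond_exp_intg[OF IeF ZM])
  also have "\<dots> = (\<integral>\<^sup>+ \<omega>. 0 \<partial>M)" by (rule nn_integral_cong_AE[OF IZ])
  finally have "(\<integral>\<^sup>+ \<omega>. ennreal (I \<omega>) * nn_cond_exp M F Z \<omega> \<partial>M) = 0" by simp
  hence IN: "AE \<omega> in M. ennreal (I \<omega>) * nn_cond_exp M F Z \<omega> = 0"
    by (subst (asm) nn_integral_0_iff_AE) (use IeM in simp_all)
  have c2: "AE \<omega> in M. nn_cond_exp M F Z \<omega> \<ge> ennreal c"
    using c(2) unfolding Yc_def[symmetric] Z_def[symmetric] .
  from IN c2 show ?thesis
  proof eventually_elim
    case (elim \<omega>)
    show ?case
    proof
      assume "\<omega> \<in> A"
      hence "nn_cond_exp M F Z \<omega> = 0" using elim(1) by (simp add: I_def)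
      with elim(2) c(1) show False by simp
    qed
  qed
qed

lemma key_b:
  fixes M :: "'a measure" and Y :: "'a \<Rightarrow> real" and X :: "'a \<Rightarrow> real^'k"
    and a b \<beta> \<gamma> :: "real^'k"
  assumes P: "prob_space M"
    and Ymeas: "Y \<in> borel_measurable M" and Xmeas: "X \<in> borel_measurable M"
    and Yint: "integrable M Y"
    and A1: "scale_assm D s s1 s2 s3"
    and A2: "\<exists>c>0. AE \<omega> in M.
               nn_cond_exp M (vimage_algebra (space M) X borel)
                 (\<lambda>\<omega>'. ennreal ((Y \<omega>' - real_cond_exp M (vimage_algebra (space M) X borel) Y \<omega>')\<^sup>2)) \<omega>
               \<ge> ennreal c"
    and inD: "AE \<omega> in M. X \<omega> \<bullet> \<gamma> \<in> D"
    and L0: "AE \<omega> in M. X \<omega> \<bullet> a + (X \<omega> \<bullet> b) * (s1 (X \<omega> \<bullet> \<gamma>) * resid s (Y \<omega>) (X \<omega>) \<beta> \<gamma>) = 0"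
  shows "AE \<omega> in M. X \<omega> \<bullet> b = 0"
  proof -
    define F where "F = vimage_algebra (space M) X borel"
    have XF: "X \<in> measurable F borel" unfolding F_def by (rule measurable_vimage_algebra1) auto
    have subalg: "subalgebra M F"
      unfolding subalgebra_def F_def using Xmeas
      by (auto simp: sets_vimage_algebra2 measurable_sets)
    have fms: "finite_measure_subalgebra M F"
      using subalg P by (auto simp: finite_measure_subalgebra_def finite_measure_subalgebra_axioms_def prob_space_def)
    have sfs: "sigma_finite_subalgebra M F" by (rule finite_measure_subalgebra_is_sigma_finite[OF fms])
    have Dcases: "D = {0<..} \<or> D = UNIV" using A1 unfolding scale_assm_def by auto
    have openD: "open D" using Dcases by (elim disjE) simp_all
    have Dborel: "D \<in> sets borel" by (rule borel_open[OF openD])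
    have cs: "continuous_on D s"
      using A1 unfolding scale_assm_def continuous_on_eq_continuous_at[OF openD]
      by (auto intro: DERIV_isCont)
    have cs1: "continuous_on D s1"
      using A1 unfolding scale_assm_def continuous_on_eq_continuous_at[OF openD]
      by (auto intro: DERIV_isCont)
    define s' where "s' = (\<lambda>t. if t \<in> D then s t else 1)"
    define s1' where "s1' = (\<lambda>t. if t \<in> D then s1 t else 1)"
    have s'meas[measurable]: "s' \<in> borel_measurable borel"
      unfolding s'_def by (rule borel_measurable_continuous_on_if[OF Dborel cs continuous_on_const])
    have s1'meas[measurable]: "s1' \<in> borel_measurable borel"
      unfolding s1'_def by (rule borel_measurable_continuous_on_if[OF Dborel cs1 continuous_on_const])
    define h where "h x = x \<bullet> \<beta> - (x \<bullet> a) * s' (x \<bullet> \<gamma>) / ((x \<bullet> b) * s1' (x \<bullet> \<gamma>))" for x :: "real^'k"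
    have hmeas: "h \<in> borel_measurable borel" unfolding h_def by measurable
    define A where "A = {\<omega> \<in> space M. X \<omega> \<bullet> b \<noteq> 0}"
    have AF: "A \<in> sets F"
    proof -
      have "X -` {x. x \<bullet> b \<noteq> 0} \<inter> space M \<in> sets F"
        unfolding F_def by (rule in_vimage_algebra) measurable
      moreover have "X -` {x. x \<bullet> b \<noteq> 0} \<inter> space M = A" unfolding A_def by auto
      ultimately show ?thesis by simp
    qed
    have hXF: "(\<lambda>\<omega>. h (X \<omega>)) \<in> borel_measurable F" using measurable_comp[OF XF hmeas] by (simp add: comp_def)
    have YA: "AE \<omega> in M. \<omega> \<in> A \<longrightarrow> Y \<omega> = h (X \<omega>)"
      using L0 inD
    proof eventually_elim
      case (elim \<omega>)
      show ?case
      proof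
        assume "\<omega> \<in> A"
        hence nz: "X \<omega> \<bullet> b \<noteq> 0" unfolding A_def by auto
        have Sp: "s (X \<omega> \<bullet> \<gamma>) > 0" using A1 elim(2) unfolding scale_assm_def by blast
        have S1p: "s1 (X \<omega> \<bullet> \<gamma>) > 0" using s1_pos[OF A1 elim(2)] .
        have e: "X \<omega> \<bullet> a * s (X \<omega> \<bullet> \<gamma>) + X \<omega> \<bullet> b * s1 (X \<omega> \<bullet> \<gamma>) * (Y \<omega> - X \<omega> \<bullet> \<beta>) = 0"
          using elim(1) Sp unfolding resid_def by (simp add: field_simps)
        show "Y \<omega> = h (X \<omega>)"
          unfolding h_def s'_def s1'_def using elim(2) nz S1p e
          by (simp add: field_simps)
      qed
    qed
    obtain c where c: "c > 0" "AE \<omega> in M. nn_cond_exp M F (\<lambda>\<omega>'. ennreal ((Y \<omega>' - real_cond_exp M F Y \<omega>')\<^sup>2)) \<omega> \<ge> ennreal c"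
      using A2 unfolding F_def[symmetric] by blast
    have "AE \<omega> in M. \<omega> \<notin> A"
      by (rule sigma_finite_subalgebra.condvar_null[OF sfs Yint Ymeas AF hXF YA c])
    with AE_space show ?thesis by eventually_elim (auto simp: A_def)
  qed


theorem lemmaA2:
  fixes M :: "'a measure" and Y :: "'a \<Rightarrow> real" and X :: "'a \<Rightarrow> real^'k"
    and i0 :: 'k and D :: "real set" and s s1 s2 s3 :: "real \<Rightarrow> real"
    and B_beta B_gamma :: "(real^'k) set" and \<beta> \<gamma> :: "real^'k"
  assumes P: "prob_space M"
    and Ymeas: "Y \<in> borel_measurable M" and Xmeas: "X \<in> borel_measurable M"
    and Yint: "integrable M Y"
    and X1: "\<forall>\<omega>\<in>space M. X \<omega> $ i0 = 1"
    and A1: "scale_assm D s s1 s2 s3"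
    and A2: "\<exists>c>0. AE \<omega> in M.
               nn_cond_exp M (vimage_algebra (space M) X borel)
                 (\<lambda>\<omega>'. ennreal ((Y \<omega>' - real_cond_exp M (vimage_algebra (space M) X borel) Y \<omega>')\<^sup>2)) \<omega>
               \<ge> ennreal c"
    and A4: "\<forall>g\<in>Theta_gamma M X D s.
               invertible (\<chi> i j. integral\<^sup>L M (\<lambda>\<omega>. X \<omega> $ i * X \<omega> $ j / s (X \<omega> \<bullet> g)))"
    and Bb: "compact B_beta" and Bg: "compact B_gamma" and Bg_sub: "B_gamma \<subseteq> Theta_gamma M X D s"
    and integ: "\<forall>b\<in>B_beta. \<forall>g\<in>B_gamma. \<forall>i j.
               integrable M (\<lambda>\<omega>. Psi_integrand s s1 (Y \<omega>) (X \<omega>) b g i j)"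
    and th: "\<beta> \<in> B_beta" "\<gamma> \<in> B_gamma"
  shows "pos_def_matrix (Psi M Y X s s1 \<beta> \<gamma>)"
proof -
  interpret prob_space M by (rule P)
  let ?f = "\<lambda>i j \<omega>. Psi_integrand s s1 (Y \<omega>) (X \<omega>) \<beta> \<gamma> i j"
  let ?P = "Psi M Y X s s1 \<beta> \<gamma>"
  have fint: "integrable M (?f i j)" for i j using integ th by blast
  have fsym: "(\<lambda>\<omega>. ?f j i \<omega>) = (\<lambda>\<omega>. ?f i j \<omega>)" for i j
    unfolding Psi_integrand_def by (rule ext) (auto split: sum.splits simp: mult_ac)
  have Pij: "?P $ j $ i = ?P $ i $ j" for i j
    unfolding Psi_def by (simp only: vec_lambda_beta fsym[of i j])
  have sym: "transpose ?P = ?P"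
    by (simp add: transpose_def vec_eq_iff Pij)
  have gT: "\<gamma> \<in> Theta_gamma M X D s" using Bg_sub th by auto
  have inD: "AE \<omega> in M. X \<omega> \<bullet> \<gamma> \<in> D"
  proof -
    have "AE \<omega> in M. \<omega> \<in> {\<omega>\<in>space M. X \<omega> \<bullet> \<gamma> \<in> D \<and> s (X \<omega> \<bullet> \<gamma>) > 0}"
      by (rule AE_prob_1) (use gT in \<open>simp add: Theta_gamma_def\<close>)
    thus ?thesis by auto
  qed
  have spos: "s t > 0" if "t \<in> D" for t using A1 that unfolding scale_assm_def by auto
  have s1pos: "s1 t > 0" if "t \<in> D" for t using s1_pos[OF A1 that] .
  have ker: "c = 0" if c0: "AE \<omega> in M. X \<omega> \<bullet> c = 0" for c
  proof -
    let ?G = "\<chi> i j. integral\<^sup>L M (\<lambda>\<omega>. X \<omega> $ i * X \<omega> $ j / s (X \<omega> \<bullet> \<gamma>))"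
    have inv: "invertible ?G" using A4 gT by blast
    have intg: "integrable M (\<lambda>\<omega>. X \<omega> $ i * X \<omega> $ j / s (X \<omega> \<bullet> \<gamma>))" for i j
      using fint[of "Inl i" "Inl j"] by (simp add: Psi_integrand_def)
    have "(?G *v c) $ i = 0" for i
    proof -
      have "(?G *v c) $ i = (\<Sum>j\<in>UNIV. integral\<^sup>L M (\<lambda>\<omega>. X \<omega> $ i * X \<omega> $ j / s (X \<omega> \<bullet> \<gamma>)) * c$j)"
        by (simp add: matrix_vector_mult_def)
      also have "\<dots> = (\<Sum>j\<in>UNIV. integral\<^sup>L M (\<lambda>\<omega>. X \<omega> $ i * X \<omega> $ j / s (X \<omega> \<bullet> \<gamma>) * c$j))"
        by (simp only: integral_mult_left_zero)
      also have "\<dots> = integral\<^sup>L M (\<lambda>\<omega>. \<Sum>j\<in>UNIV. X \<omega> $ i * X \<omega> $ j / s (X \<omega> \<bullet> \<gamma>) * c$j)"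
        by (rule Bochner_Integration.integral_sum[symmetric], rule integrable_mult_left, rule intg)
      also have "\<dots> = 0"
      proof (rule integral_eq_zero_AE)
        show "AE \<omega> in M. (\<Sum>j\<in>UNIV. X \<omega> $ i * X \<omega> $ j / s (X \<omega> \<bullet> \<gamma>) * c$j) = 0"
          using c0
        proof eventually_elim
          case (elim \<omega>)
          have "(\<Sum>j\<in>UNIV. X \<omega> $ i * X \<omega> $ j / s (X \<omega> \<bullet> \<gamma>) * c$j)
              = (\<Sum>j\<in>UNIV. (X \<omega> $ i / s (X \<omega> \<bullet> \<gamma>)) * (X \<omega> $ j * c$j))"
            by (rule sum.cong) simp_all
          also have "\<dots> = X \<omega> $ i / s (X \<omega> \<bullet> \<gamma>) * (X \<omega> \<bullet> c)"
            by (simp only: inner_vec_def[of "X \<omega>" c] sum_distrib_left inner_real_def)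
          also have "\<dots> = 0" unfolding elim by (rule mult_zero_right)
          finally show ?case .
        qed
      qed
      finally show ?thesis .
    qed
    hence Gc: "?G *v c = 0" by (simp add: vec_eq_iff)
    obtain G' where G': "G' ** ?G = mat 1" using inv unfolding invertible_def by blast
    have "c = mat 1 *v c" by (simp only: matrix_vector_mul_lid)
    also have "\<dots> = (G' ** ?G) *v c" by (simp only: G')
    also have "\<dots> = G' *v (?G *v c)" by (simp only: matrix_vector_mul_assoc)
    also have "\<dots> = 0" by (simp only: Gc matrix_vector_mult_0_right)
    finally show "c = 0" .
  qed
  have quad: "v \<bullet> (?P *v v) = integral\<^sup>L M (\<lambda>\<omega>. \<Sum>i\<in>UNIV. \<Sum>j\<in>UNIV. v$i * v$j * ?f i j \<omega>)" for v
  proof -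
    have "v \<bullet> (?P *v v) = (\<Sum>i\<in>UNIV. \<Sum>j\<in>UNIV. integral\<^sup>L M (\<lambda>\<omega>. v$i * v$j * ?f i j \<omega>))"
      by (simp add: inner_vec_def matrix_vector_mult_def Psi_def sum_distrib_left mult_ac)
    also have "\<dots> = (\<Sum>i\<in>UNIV. integral\<^sup>L M (\<lambda>\<omega>. \<Sum>j\<in>UNIV. v$i * v$j * ?f i j \<omega>))"
      by (rule sum.cong[OF refl], rule Bochner_Integration.integral_sum[symmetric]) (use fint in auto)
    also have "\<dots> = integral\<^sup>L M (\<lambda>\<omega>. \<Sum>i\<in>UNIV. \<Sum>j\<in>UNIV. v$i * v$j * ?f i j \<omega>)"
      by (rule Bochner_Integration.integral_sum[symmetric]) (use fint in auto)
    finally show ?thesis .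
  qed
  show ?thesis unfolding pos_def_matrix_def
  proof (intro conjI allI impI sym)
    fix v :: "real^('k+'k)" assume v0: "v \<noteq> 0"
    define a where "a = (\<chi> i. v$Inl i)"
    define b where "b = (\<chi> i. v$Inr i)"
    define T where "T \<omega> = s1 (X \<omega> \<bullet> \<gamma>) * resid s (Y \<omega>) (X \<omega>) \<beta> \<gamma>" for \<omega>
    define L where "L \<omega> = X \<omega> \<bullet> a + (X \<omega> \<bullet> b) * T \<omega>" for \<omega>
    let ?q = "\<lambda>\<omega>. \<Sum>i\<in>UNIV. \<Sum>j\<in>UNIV. v$i * v$j * ?f i j \<omega>"
    have qeq: "?q \<omega> = (L \<omega>)\<^sup>2 / s (X \<omega> \<bullet> \<gamma>)" for \<omega>
      unfolding L_def T_def a_def b_def by (rule quad_form)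
    have qint: "integrable M ?q" by (intro Bochner_Integration.integrable_sum integrable_mult_right fint)
    have qnn: "AE \<omega> in M. 0 \<le> ?q \<omega>" using inD by eventually_elim (simp add: qeq spos less_imp_le)
    have ge: "0 \<le> v \<bullet> (?P *v v)" unfolding quad by (rule integral_nonneg_AE[OF qnn])
    show "v \<bullet> (?P *v v) > 0"
    proof (rule ccontr)
      assume "\<not> ?thesis"
      with ge have "integral\<^sup>L M ?q = 0" using quad by simp
      hence "AE \<omega> in M. ?q \<omega> = 0" using integral_nonneg_eq_0_iff_AE[OF qint qnn] by simp
      hence L0: "AE \<omega> in M. L \<omega> = 0" using inD
      proof eventually_elim
        case (elim \<omega>)
        have Sp: "s (X \<omega> \<bullet> \<gamma>) > 0" using spos elim(2) by blast
        have "(L \<omega>)\<^sup>2 / s (X \<omega> \<bullet> \<gamma>) = 0" using elim(1) unfolding qeq .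
        hence "(L \<omega>)\<^sup>2 = 0" using Sp by simp
        thus ?case by simp
      qed
      have L0': "AE \<omega> in M. X \<omega> \<bullet> a + (X \<omega> \<bullet> b) * (s1 (X \<omega> \<bullet> \<gamma>) * resid s (Y \<omega>) (X \<omega>) \<beta> \<gamma>) = 0"
        using L0 unfolding L_def T_def .
      have bAE: "AE \<omega> in M. X \<omega> \<bullet> b = 0"
        by (rule key_b[OF P Ymeas Xmeas Yint A1 A2 inD L0'])
      have b0: "b = 0" using ker[OF bAE] .
      have a0: "a = 0" using L0 by (intro ker) (simp add: L_def b0)
      have "v = 0" unfolding vec_eq_iff
      proof
        fix i show "v $ i = 0 $ i"
          using a0 b0 by (cases i) (auto simp: a_def b_def vec_eq_iff)
      qed
      with v0 show False by simp
    qed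
  qed
qed

end
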